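(* Let $I$ be a resident-minimal instance and $J$ a simple extension of $I$. Then there is a simple and hospital-complete extension $J'$ of $I$ such that $\mathrm{rej}(J)\subseteq\mathrm{rej}(J')$.
   Context: An instance $I$ consists of finite disjoint sets $R$ (residents) and $H$ (hospitals), a positive integer quota $q_h$ for each $h\in H$, for each $r\in R$ a preference list of $r$ (a sequence of distinct members of $H$, not necessarily all), and for each $h\in H$ a preference list of $h$ (a sequence of distinct members of $R$). A list is complete if it contains every member of the opposite side; an instance is hospital-complete if every hospital's list is complete. A match is a pair $(r,h)\in R\times H$. For a set $M$ of matches, $\mathrm{res}_h M=\{r:(r,h)\in M\}$, $\mathrm{res}\,M=\{r:(r,h)\in M\text{ for some }h\}$. $J$ is an extension of $I$ (same $R,H$, quotas) if every list of $J$ has the corresponding list of $I$ as a prefix. An event is $(r,h)^+$ (proposal) or $(r,h)^-$ (rejection). For an event sequence $\sigma$, $\mathrm{prop}(\sigma)$, $\mathrm{rej}(\sigma)$ are the sets of matches proposed/rejected in $\sigma$ and $\mathrm{tent}(\sigma)=\mathrm{prop}(\sigma)\setminus\mathrm{rej}(\sigma)$. A match $(r,h)\in M$ is ousted from $M$ in $I$ if the list of $h$ in $I$ contains at least $q_h$ residents of $\mathrm{res}_h M$ and either $r$ is not on it or $r$ is preceded on it by at least $q_h$ residents of $\mathrm{res}_h M$. $I$-feasible sequences: the empty sequence is $I$-feasible; if $\sigma$ is $I$-feasible then $\sigma+(r,h)^+$ is $I$-feasible if $r\notin\mathrm{res}\,\mathrm{tent}(\sigma)$, $(r,h)\notin\mathrm{prop}(\sigma)$,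 $h$ is on the list of $r$ in $I$ and $(r,h')\in\mathrm{rej}(\sigma)$ for every $h'$ preceding $h$ on it; and $\sigma+(r,h)^-$ is $I$-feasible if $(r,h)$ is ousted from $\mathrm{prop}(\sigma)$ in $I$ and $(r,h)\notin\mathrm{rej}(\sigma)$. All maximal $I$-feasible sequences contain the same events; $\mathrm{prop}(I),\mathrm{rej}(I)$ denote $\mathrm{prop}(\sigma),\mathrm{rej}(\sigma)$ for any maximal $I$-feasible $\sigma$. $I$ is resident-minimal if $\mathrm{prop}(I)$ equals the set of matches $(r,h)$ with $h$ on the list of $r$ in $I$. An extension $J$ of $I$ is simple if $(\mathrm{prop}(J)\setminus\mathrm{prop}(I))\cap(\mathrm{rej}(J)\setminus\mathrm{rej}(I))=\emptyset$. *)

theory Defs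
  imports Main "HOL-Library.Sublist"
begin

text \<open>Instances of the Hospitals/Residents problem. Residents have type 'r, hospitals
type 'h (so R and H are automatically disjoint).\<close>

record ('r, 'h) hr_instance =
  Res   :: "'r set"
  Hosp  :: "'h set"
  quota :: "'h \<Rightarrow> nat"
  rpref :: "'r \<Rightarrow> 'h list"
  hpref :: "'h \<Rightarrow> 'r list"

definition wf_instance :: "('r, 'h) hr_instance \<Rightarrow> bool" where
  "wf_instance I \<longleftrightarrow> finite (Res I) \<and> finite (Hosp I)
     \<and> (\<forall>h\<in>Hosp I. quota I h > 0)
     \<and> (\<forall>r\<in>Res I. distinct (rpref I r) \<and> set (rpref I r) \<subseteq> Hosp I)
     \<and> (\<forall>h\<in>Hosp I. distinct (hpref I h) \<and> set (hpref I h) \<subseteq> Res I)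
     \<and> (\<forall>r. r \<notin> Res I \<longrightarrow> rpref I r = [])
     \<and> (\<forall>h. h \<notin> Hosp I \<longrightarrow> hpref I h = [])"

definition hospital_complete :: "('r, 'h) hr_instance \<Rightarrow> bool" where
  "hospital_complete I \<longleftrightarrow> (\<forall>h\<in>Hosp I. set (hpref I h) = Res I)"

definition res_h :: "('r \<times> 'h) set \<Rightarrow> 'h \<Rightarrow> 'r set" where
  "res_h M h = {r. (r, h) \<in> M}"

definition res :: "('r \<times> 'h) set \<Rightarrow> 'r set" where
  "res M = {r. \<exists>h. (r, h) \<in> M}"

definition is_extension :: "('r, 'h) hr_instance \<Rightarrow> ('r, 'h) hr_instance \<Rightarrow> bool" where
  "is_extension I J \<longleftrightarrow> wf_instance J \<and> Res J = Res I \<and> Hosp J = Hosp I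
     \<and> (\<forall>h\<in>Hosp I. quota J h = quota I h)
     \<and> (\<forall>r\<in>Res I. prefix (rpref I r) (rpref J r))
     \<and> (\<forall>h\<in>Hosp I. prefix (hpref I h) (hpref J h))"

datatype ('r, 'h) event = Propose 'r 'h | Reject 'r 'h

definition props :: "('r, 'h) event list \<Rightarrow> ('r \<times> 'h) set" where
  "props \<sigma> = {(r, h). Propose r h \<in> set \<sigma>}"

definition rejs :: "('r, 'h) event list \<Rightarrow> ('r \<times> 'h) set" where
  "rejs \<sigma> = {(r, h). Reject r h \<in> set \<sigma>}"

definition tent :: "('r, 'h) event list \<Rightarrow> ('r \<times> 'h) set" where
  "tent \<sigma> = props \<sigma> - rejs \<sigma>"

definition ousted :: "('r, 'h) hr_instance \<Rightarrow> ('r \<times> 'h) set \<Rightarrow> 'r \<Rightarrow> 'h \<Rightarrow> bool" where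
  "ousted I M r h \<longleftrightarrow> (r, h) \<in> M
     \<and> card (set (hpref I h) \<inter> res_h M h) \<ge> quota I h
     \<and> (r \<notin> set (hpref I h)
        \<or> card (set (takeWhile (\<lambda>x. x \<noteq> r) (hpref I h)) \<inter> res_h M h) \<ge> quota I h)"

inductive feasible :: "('r, 'h) hr_instance \<Rightarrow> ('r, 'h) event list \<Rightarrow> bool"
  for I where
  feasible_Nil: "feasible I []"
| feasible_Prop: "\<lbrakk> feasible I \<sigma>; r \<notin> res (tent \<sigma>); (r, h) \<notin> props \<sigma>;
      h \<in> set (rpref I r);
      \<forall>h'\<in>set (takeWhile (\<lambda>x. x \<noteq> h) (rpref I r)). (r, h') \<in> rejs \<sigma> \<rbrakk>
    \<Longrightarrow> feasible I (\<sigma> @ [Propose r h])"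
| feasible_Rej: "\<lbrakk> feasible I \<sigma>; ousted I (props \<sigma>) r h; (r, h) \<notin> rejs \<sigma> \<rbrakk>
    \<Longrightarrow> feasible I (\<sigma> @ [Reject r h])"

definition maximal_feasible :: "('r, 'h) hr_instance \<Rightarrow> ('r, 'h) event list \<Rightarrow> bool" where
  "maximal_feasible I \<sigma> \<longleftrightarrow> feasible I \<sigma> \<and> \<not> (\<exists>e. feasible I (\<sigma> @ [e]))"

definition propI :: "('r, 'h) hr_instance \<Rightarrow> ('r \<times> 'h) set" where
  "propI I = props (SOME \<sigma>. maximal_feasible I \<sigma>)"

definition rejI :: "('r, 'h) hr_instance \<Rightarrow> ('r \<times> 'h) set" where
  "rejI I = rejs (SOME \<sigma>. maximal_feasible I \<sigma>)"

definition resident_minimal :: "('r, 'h) hr_instance \<Rightarrow> bool" where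
  "resident_minimal I \<longleftrightarrow> propI I = {(r, h). r \<in> Res I \<and> h \<in> set (rpref I r)}"

definition simple_extension :: "('r, 'h) hr_instance \<Rightarrow> ('r, 'h) hr_instance \<Rightarrow> bool" where
  "simple_extension I J \<longleftrightarrow> is_extension I J
     \<and> (propI J - propI I) \<inter> (rejI J - rejI I) = {}"

end

theory Submission
  imports Defs
begin

definition acc :: "('r,'h) hr_instance \<Rightarrow> ('r \<times> 'h) set" where
  "acc X = {(r,h). h \<in> set (rpref X r)}"

lemma props_append[simp]: "props (xs @ ys) = props xs \<union> props ys"
  by (auto simp: props_def)
lemma rejs_append[simp]: "rejs (xs @ ys) = rejs xs \<union> rejs ys"
  by (auto simp: rejs_def)
lemma props_simps[simp]: "props [] = {}" "props [Propose r h] = {(r,h)}" "props [Reject r h] = {}"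
  by (auto simp: props_def)
lemma rejs_simps[simp]: "rejs [] = {}" "rejs [Propose r h] = {}" "rejs [Reject r h] = {(r,h)}"
  by (auto simp: rejs_def)

lemma feasible_inv:
  "feasible X \<tau> \<Longrightarrow> props \<tau> \<subseteq> acc X \<and> rejs \<tau> \<subseteq> props \<tau>
    \<and> (\<forall>r h. (r,h) \<in> props \<tau> \<longrightarrow> (\<forall>h'\<in>set (takeWhile (\<lambda>x. x \<noteq> h) (rpref X r)). (r,h') \<in> rejs \<tau>))
    \<and> distinct \<tau>"
proof (induction rule: feasible.induct)
  case feasible_Nil
  then show ?case by simp
next
  case (feasible_Prop \<sigma> r h)
  have "Propose r h \<notin> set \<sigma>" using feasible_Prop(3) by (auto simp: props_def)
  then show ?case using feasible_Prop by (auto simp: acc_def)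
next
  case (feasible_Rej \<sigma> r h)
  have "Reject r h \<notin> set \<sigma>" using feasible_Rej(3) by (auto simp: rejs_def)
  moreover have "(r,h) \<in> props \<sigma>" using feasible_Rej(2) by (simp add: ousted_def)
  ultimately show ?case using feasible_Rej by auto
qed

lemma tw_order:
  "x \<in> set xs \<Longrightarrow> y \<in> set xs \<Longrightarrow> x \<noteq> y \<Longrightarrow>
   x \<in> set (takeWhile (\<lambda>z. z \<noteq> y) xs) \<or> y \<in> set (takeWhile (\<lambda>z. z \<noteq> x) xs)"
proof (induction xs)
  case Nil then show ?case by simp
next
  case (Cons a xs)
  show ?case
  proof (cases "a = x \<or> a = y")
    case True then show ?thesis using Cons.prems(3) by (elim disjE; simp)
  next
    case False
    then have "x \<in> set xs" "y \<in> set xs" using Cons.prems by auto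
    then have "x \<in> set (takeWhile (\<lambda>z. z \<noteq> y) xs) \<or> y \<in> set (takeWhile (\<lambda>z. z \<noteq> x) xs)"
      using Cons.IH Cons.prems(3) by blast
    then show ?thesis using False by auto
  qed
qed

lemma tw_app_notin: "r \<notin> set L \<Longrightarrow> takeWhile (\<lambda>x. x \<noteq> r) (L @ Z) = L @ takeWhile (\<lambda>x. x \<noteq> r) Z"
  by (induction L) auto

lemma tw_filter:
  "P h \<Longrightarrow> x \<in> set (takeWhile (\<lambda>z. z \<noteq> h) (filter P xs)) \<Longrightarrow> x \<in> set (takeWhile (\<lambda>z. z \<noteq> h) xs)"
  by (induction xs) (auto split: if_splits)

lemma ousted_fwd:
  assumes "ousted A M r h" "(r,h) \<in> M'" "prefix (hpref A h) (hpref B h)" "quota B h = quota A h"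
    "set (hpref A h) \<inter> res_h M h \<subseteq> res_h M' h"
  shows "ousted B M' r h"
proof -
  obtain Z where Z: "hpref B h = hpref A h @ Z" using assms(3) prefixE by blast
  let ?L = "hpref A h"
  have c1: "card (set ?L \<inter> res_h M h) \<le> card (set ?L \<inter> res_h M' h)"
    using assms(5) by (intro card_mono) auto
  have c2: "card (set ?L \<inter> res_h M' h) \<le> card (set (hpref B h) \<inter> res_h M' h)"
    by (intro card_mono) (auto simp: Z)
  have q: "quota A h \<le> card (set ?L \<inter> res_h M h)" using assms(1) by (simp add: ousted_def)
  have dis: "r \<notin> set ?L \<or> quota A h \<le> card (set (takeWhile (\<lambda>x. x \<noteq> r) ?L) \<inter> res_h M h)"
    using assms(1) by (simp add: ousted_def)
  have "r \<notin> set (hpref B h) \<or> quota B h \<le> card (set (takeWhile (\<lambda>x. x \<noteq> r) (hpref B h)) \<inter> res_h M' h)"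
  proof (cases "r \<in> set ?L")
    case True
    then have tw: "takeWhile (\<lambda>x. x \<noteq> r) (hpref B h) = takeWhile (\<lambda>x. x \<noteq> r) ?L"
      by (simp add: Z takeWhile_append1)
    have "card (set (takeWhile (\<lambda>x. x \<noteq> r) ?L) \<inter> res_h M h) \<le> card (set (takeWhile (\<lambda>x. x \<noteq> r) ?L) \<inter> res_h M' h)"
      using assms(5) set_takeWhileD by (intro card_mono) fastforce+
    then show ?thesis using True dis tw assms(4) by auto
  next
    case False
    then have tw: "takeWhile (\<lambda>x. x \<noteq> r) (hpref B h) = ?L @ takeWhile (\<lambda>x. x \<noteq> r) Z"
      unfolding Z by (rule tw_app_notin)
    have "card (set ?L \<inter> res_h M' h) \<le> card (set (takeWhile (\<lambda>x. x \<noteq> r) (hpref B h)) \<inter> res_h M' h)"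
      unfolding tw by (intro card_mono) auto
    then show ?thesis using c1 q assms(4) by auto
  qed
  then show ?thesis using assms(2,4) c1 c2 q by (auto simp: ousted_def)
qed

lemma acc_finite: "wf_instance X \<Longrightarrow> finite (acc X)"
proof -
  assume w: "wf_instance X"
  have "acc X \<subseteq> Res X \<times> Hosp X"
  proof
    fix p assume "p \<in> acc X"
    then obtain r h where p: "p = (r,h)" "h \<in> set (rpref X r)" by (auto simp: acc_def)
    then have "r \<in> Res X" using w unfolding wf_instance_def by force
    then show "p \<in> Res X \<times> Hosp X" using p w unfolding wf_instance_def by auto
  qed
  moreover have "finite (Res X \<times> Hosp X)" using w by (simp add: wf_instance_def)
  ultimately show ?thesis by (rule finite_subset)
qed

lemma exists_maximal:
  assumes w: "wf_instance X" shows "\<exists>\<sigma>. maximal_feasible X \<sigma>"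
proof -
  define E where "E = (\<lambda>(r,h). Propose r h) ` acc X \<union> (\<lambda>(r,h). Reject r h) ` acc X"
  have fE: "finite E" using acc_finite[OF w] by (simp add: E_def)
  have bound: "length \<tau> \<le> card E" if f: "feasible X \<tau>" for \<tau>
  proof -
    note inv = feasible_inv[OF f]
    have "set \<tau> \<subseteq> E"
    proof
      fix e assume e: "e \<in> set \<tau>"
      show "e \<in> E"
      proof (cases e)
        case (Propose r h)
        then have "(r,h) \<in> props \<tau>" using e by (auto simp: props_def)
        then show ?thesis using inv Propose by (auto simp: E_def)
      next
        case (Reject r h)
        then have "(r,h) \<in> rejs \<tau>" using e by (auto simp: rejs_def)
        then show ?thesis using inv Reject by (auto simp: E_def)
      qed
    qed
    then have "card (set \<tau>) \<le> card E" using fE by (rule card_mono[rotated])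
    then show ?thesis using inv by (simp add: distinct_card)
  qed
  define L where "L = {length \<tau> | \<tau>. feasible X \<tau>}"
  have fL: "finite L" using bound by (intro finite_subset[of L "{..card E}"]) (auto simp: L_def)
  have "0 \<in> L" unfolding L_def using feasible_Nil by force
  then have "Max L \<in> L" using fL by (intro Max_in) auto
  then obtain \<tau> where t: "feasible X \<tau>" "length \<tau> = Max L" by (auto simp: L_def)
  have "\<not> (\<exists>e. feasible X (\<tau> @ [e]))"
  proof
    assume "\<exists>e. feasible X (\<tau> @ [e])"
    then obtain e where "feasible X (\<tau> @ [e])" by blast
    then have "length \<tau> + 1 \<in> L" by (force simp: L_def)
    then have "length \<tau> + 1 \<le> Max L" using fL by simp
    then show False using t by simp
  qed
  then show ?thesis using t by (auto simp: maximal_feasible_def)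
qed

lemma dom:
  assumes pr: "\<And>r. prefix (rpref A r) (rpref B r)" and ph: "\<And>h. prefix (hpref A h) (hpref B h)"
    and q: "\<And>r h. h \<in> set (rpref A r) \<Longrightarrow> quota B h = quota A h"
    and m: "maximal_feasible B \<sigma>"
  shows "feasible A \<tau> \<Longrightarrow> props \<tau> \<subseteq> props \<sigma> \<and> rejs \<tau> \<subseteq> rejs \<sigma>"
proof (induction rule: feasible.induct)
  case feasible_Nil
  then show ?case by simp
next
  case (feasible_Prop \<tau> r h)
  have fs: "feasible B \<sigma>" and nx: "\<And>e. \<not> feasible B (\<sigma> @ [e])" using m by (auto simp: maximal_feasible_def)
  note invs = feasible_inv[OF fs]
  obtain Z where Z: "rpref B r = rpref A r @ Z" using pr prefixE by blast
  have hB: "h \<in> set (rpref B r)" using feasible_Prop(4) Z by simp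
  have tw: "takeWhile (\<lambda>x. x \<noteq> h) (rpref B r) = takeWhile (\<lambda>x. x \<noteq> h) (rpref A r)"
    using feasible_Prop(4) Z by (simp add: takeWhile_append1)
  have rj: "\<forall>h'\<in>set (takeWhile (\<lambda>x. x \<noteq> h) (rpref B r)). (r, h') \<in> rejs \<sigma>"
    using feasible_Prop(5) feasible_Prop(6) tw by auto
  have "(r,h) \<in> props \<sigma>"
  proof (rule ccontr)
    assume np: "(r,h) \<notin> props \<sigma>"
    show False
    proof (cases "r \<in> res (tent \<sigma>)")
      case False
      then have "feasible B (\<sigma> @ [Propose r h])" using fs np hB rj by (intro feasible.feasible_Prop)
      then show False using nx by blast
    next
      case True
      then obtain h0 where h0: "(r,h0) \<in> props \<sigma>" "(r,h0) \<notin> rejs \<sigma>" by (auto simp: res_def tent_def)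
      have h0B: "h0 \<in> set (rpref B r)" using h0(1) invs by (auto simp: acc_def)
      have "h \<noteq> h0" using np h0 by auto
      then have "h \<in> set (takeWhile (\<lambda>z. z \<noteq> h0) (rpref B r)) \<or> h0 \<in> set (takeWhile (\<lambda>z. z \<noteq> h) (rpref B r))"
        using tw_order[OF hB h0B] by blast
      then show False
      proof
        assume "h \<in> set (takeWhile (\<lambda>z. z \<noteq> h0) (rpref B r))"
        then have "(r,h) \<in> rejs \<sigma>" using invs h0(1) by blast
        then show False using invs np by blast
      next
        assume "h0 \<in> set (takeWhile (\<lambda>z. z \<noteq> h) (rpref B r))"
        then show False using rj h0(2) by blast
      qed
    qed
  qed
  then show ?case using feasible_Prop(6) by simp
next
  case (feasible_Rej \<tau> r h)
  have fs: "feasible B \<sigma>" and nx: "\<And>e. \<not> feasible B (\<sigma> @ [e])" using m by (auto simp: maximal_feasible_def)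
  have rh: "(r,h) \<in> props \<tau>" using feasible_Rej(2) by (simp add: ousted_def)
  then have hA: "h \<in> set (rpref A r)" using feasible_inv[OF feasible_Rej(1)] by (auto simp: acc_def)
  have "(r,h) \<in> rejs \<sigma>"
  proof (rule ccontr)
    assume nr: "(r,h) \<notin> rejs \<sigma>"
    have "ousted B (props \<sigma>) r h"
      using ousted_fwd[OF feasible_Rej(2) _ ph q[OF hA]] rh feasible_Rej(4) by (auto simp: res_h_def)
    then have "feasible B (\<sigma> @ [Reject r h])" using fs nr by (intro feasible.feasible_Rej)
    then show False using nx by blast
  qed
  then show ?case using feasible_Rej(4) by simp
qed

lemma maximal_char:
  assumes "maximal_feasible X \<sigma>" shows "propI X = props \<sigma>" "rejI X = rejs \<sigma>"
proof -
  have ex: "\<exists>\<sigma>. maximal_feasible X \<sigma>" using assms by blast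
  define \<sigma>0 where "\<sigma>0 = (SOME \<sigma>. maximal_feasible X \<sigma>)"
  have m0: "maximal_feasible X \<sigma>0" unfolding \<sigma>0_def using someI_ex[OF ex] .
  have a: "props \<sigma>0 \<subseteq> props \<sigma> \<and> rejs \<sigma>0 \<subseteq> rejs \<sigma>"
    using dom[OF _ _ _ assms] m0 by (auto simp: maximal_feasible_def)
  have b: "props \<sigma> \<subseteq> props \<sigma>0 \<and> rejs \<sigma> \<subseteq> rejs \<sigma>0"
    using dom[OF _ _ _ m0] assms by (auto simp: maximal_feasible_def)
  show "propI X = props \<sigma>" "rejI X = rejs \<sigma>" using a b
    by (auto simp: propI_def rejI_def \<sigma>0_def[symmetric])
qed

lemma ousted_back:
  assumes "ousted B M r h" "prefix (hpref A h) (hpref B h)" "r \<in> set (hpref A h)"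
    "quota B h = quota A h" "res_h M h \<subseteq> res_h M' h" "(r,h) \<in> M'"
  shows "ousted A M' r h"
proof -
  obtain Z where Z: "hpref B h = hpref A h @ Z" using assms(2) prefixE by blast
  let ?L = "hpref A h"
  let ?T = "takeWhile (\<lambda>x. x \<noteq> r) ?L"
  have tw: "takeWhile (\<lambda>x. x \<noteq> r) (hpref B h) = ?T"
    using assms(3) by (simp add: Z takeWhile_append1)
  have "r \<in> set (hpref B h)" using assms(3) Z by simp
  then have q: "quota B h \<le> card (set ?T \<inter> res_h M h)" using assms(1) tw by (simp add: ousted_def)
  have c1: "card (set ?T \<inter> res_h M h) \<le> card (set ?T \<inter> res_h M' h)"
    using assms(5) by (intro card_mono) auto
  have c2: "card (set ?T \<inter> res_h M' h) \<le> card (set ?L \<inter> res_h M' h)"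
    by (intro card_mono) (auto dest: set_takeWhileD)
  show ?thesis using q c1 c2 assms(4,6) by (auto simp: ousted_def)
qed

definition enum :: "'a set \<Rightarrow> 'a list" where
  "enum A = (SOME xs. distinct xs \<and> set xs = A)"

lemma enum: "finite A \<Longrightarrow> distinct (enum A) \<and> set (enum A) = A"
  unfolding enum_def by (rule someI_ex) (use finite_distinct_list in blast)

theorem proposition5:
  fixes I J :: "('r, 'h) hr_instance"
  assumes "wf_instance I"
    and "resident_minimal I"
    and "simple_extension I J"
  shows "\<exists>J'. simple_extension I J' \<and> hospital_complete J' \<and> rejI J \<subseteq> rejI J'"
proof -
  have wI: "wf_instance I" by fact
  have ext: "is_extension I J" and simpJ: "(propI J - propI I) \<inter> (rejI J - rejI I) = {}"
    using assms(3) by (auto simp: simple_extension_def)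
  have wJ: "wf_instance J" using ext by (simp add: is_extension_def)
  obtain \<sigma>I where mI: "maximal_feasible I \<sigma>I" using exists_maximal[OF wI] by blast
  obtain \<sigma>J where mJ: "maximal_feasible J \<sigma>J" using exists_maximal[OF wJ] by blast
  have fI: "feasible I \<sigma>I" and fJ: "feasible J \<sigma>J" using mI mJ by (auto simp: maximal_feasible_def)
  note cI = maximal_char[OF mI] and cJ = maximal_char[OF mJ]
  have accI: "propI I = acc I"
  proof -
    have "\<And>r. r \<notin> Res I \<Longrightarrow> rpref I r = []" using wI by (simp add: wf_instance_def)
    then show ?thesis using assms(2) unfolding resident_minimal_def acc_def by force
  qed
  have RP: "Res J = Res I" "Hosp J = Hosp I" using ext by (auto simp: is_extension_def)
  have prR: "prefix (rpref I r) (rpref J r)" for r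
  proof (cases "r \<in> Res I")
    case True then show ?thesis using ext by (simp add: is_extension_def)
  next
    case False then show ?thesis using wI wJ RP by (simp add: wf_instance_def)
  qed
  have prH: "prefix (hpref I h) (hpref J h)" for h
  proof (cases "h \<in> Hosp I")
    case True then show ?thesis using ext by (simp add: is_extension_def)
  next
    case False then show ?thesis using wI wJ RP by (simp add: wf_instance_def)
  qed
  have qIJ: "quota J h = quota I h" if "h \<in> set (rpref I r)" for r h
  proof -
    have "r \<in> Res I" using that wI by (auto simp: wf_instance_def)
    then have "h \<in> Hosp I" using that wI by (auto simp: wf_instance_def)
    then show ?thesis using ext by (simp add: is_extension_def)
  qed
  have PIJ: "propI I \<subseteq> propI J" "rejI I \<subseteq> rejI J"
    using dom[OF prR prH qIJ mJ fI] cI cJ by auto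
  have RPI: "rejI I \<subseteq> propI I" using feasible_inv[OF fI] cI by auto
  have RPJ: "rejI J \<subseteq> propI J" using feasible_inv[OF fJ] cJ by auto
  have RJ: "rejI J \<subseteq> propI I" using RPJ simpJ RPI by blast
  define S where "S = acc I \<union> {(r,h). (r,h) \<in> propI J \<and> r \<in> set (hpref J h)}"
  have SPJ: "S \<subseteq> propI J" using PIJ accI by (auto simp: S_def)
  define K where "K = J\<lparr> rpref := (\<lambda>r. filter (\<lambda>h. (r,h) \<in> S) (rpref J r)),
     hpref := (\<lambda>h. if h \<in> Hosp J then hpref J h @ enum (Res J - set (hpref J h)) else []) \<rparr>"
  have K_simps: "Res K = Res J" "Hosp K = Hosp J" "quota K = quota J"
    "rpref K r = filter (\<lambda>h. (r,h) \<in> S) (rpref J r)"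
    "hpref K h = (if h \<in> Hosp J then hpref J h @ enum (Res J - set (hpref J h)) else [])" for r h
    by (simp_all add: K_def)
  have finR: "finite (Res J)" using wJ by (simp add: wf_instance_def)
  have en: "distinct (enum (Res J - set (hpref J h))) \<and> set (enum (Res J - set (hpref J h))) = Res J - set (hpref J h)" for h
    using enum finR by blast
  have wK: "wf_instance K"
    using wJ en unfolding wf_instance_def K_simps by auto
  have compK: "hospital_complete K"
    using wJ en unfolding hospital_complete_def wf_instance_def K_simps by auto
  have prJK: "prefix (hpref J h) (hpref K h)" for h
    using wJ by (auto simp: K_simps wf_instance_def)
  have extK: "is_extension I K"
  proof -
    have "prefix (rpref I r) (rpref K r)" if "r \<in> Res I" for r
    proof -
      obtain Z where Z: "rpref J r = rpref I r @ Z" using prR prefixE by blast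
      have "filter (\<lambda>h. (r,h) \<in> S) (rpref I r) = rpref I r"
        by (auto simp: S_def acc_def)
      then show ?thesis by (simp add: K_simps Z)
    qed
    moreover have "prefix (hpref I h) (hpref K h)" for h
      using prH prJK by (rule prefix_order.trans)
    ultimately show ?thesis using wK ext unfolding is_extension_def K_simps by auto
  qed
  have accK: "acc K \<subseteq> S" by (auto simp: acc_def K_simps)
  define keep where "keep = (\<lambda>e. case e of Propose r h \<Rightarrow> (r,h) \<in> S | Reject r h \<Rightarrow> True)"
  have pf: "props (filter keep \<tau>) = props \<tau> \<inter> S" for \<tau>
    by (auto simp: props_def keep_def)
  have rf: "rejs (filter keep \<tau>) = rejs \<tau>" for \<tau>
    by (auto simp: rejs_def keep_def)
  have domJ: "props \<tau> \<subseteq> propI J \<and> rejs \<tau> \<subseteq> rejI J" if "feasible J \<tau>" for \<tau>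
    using dom[OF _ _ _ mJ that] cJ by auto
  have fK: "feasible K (filter keep \<tau>)" if "feasible J \<tau>" for \<tau>
    using that
  proof (induction rule: feasible.induct)
    case feasible_Nil
    then show ?case by (simp add: feasible.feasible_Nil)
  next
    case (feasible_Prop \<tau> r h)
    show ?case
    proof (cases "(r,h) \<in> S")
      case False
      then show ?thesis using feasible_Prop(6) by (simp add: keep_def)
    next
      case True
      have eq: "filter keep (\<tau> @ [Propose r h]) = filter keep \<tau> @ [Propose r h]"
        using True by (simp add: keep_def)
      have "tent (filter keep \<tau>) \<subseteq> tent \<tau>" by (auto simp: tent_def pf rf)
      then have "r \<notin> res (tent (filter keep \<tau>))" using feasible_Prop(2) by (auto simp: res_def)
      moreover have "(r,h) \<notin> props (filter keep \<tau>)" using feasible_Prop(3) by (simp add: pf)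
      moreover have "h \<in> set (rpref K r)" using feasible_Prop(4) True by (simp add: K_simps)
      moreover have "\<forall>h'\<in>set (takeWhile (\<lambda>x. x \<noteq> h) (rpref K r)). (r, h') \<in> rejs (filter keep \<tau>)"
        using feasible_Prop(5) tw_filter[of "\<lambda>h. (r,h) \<in> S", OF True] by (auto simp: K_simps rf)
      ultimately show ?thesis unfolding eq using feasible_Prop(6) by (intro feasible.feasible_Prop)
    qed
  next
    case (feasible_Rej \<tau> r h)
    have fr: "feasible J (\<tau> @ [Reject r h])" using feasible_Rej(1-3) by (rule feasible.feasible_Rej)
    have "(r,h) \<in> rejI J" using domJ[OF fr] by auto
    then have rS: "(r,h) \<in> S" using RJ accI by (auto simp: S_def)
    have rp: "(r,h) \<in> props \<tau>" using feasible_Rej(2) by (simp add: ousted_def)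
    have sub: "set (hpref J h) \<inter> res_h (props \<tau>) h \<subseteq> res_h (props (filter keep \<tau>)) h"
      using domJ[OF feasible_Rej(1)] by (auto simp: res_h_def pf S_def)
    have "ousted K (props (filter keep \<tau>)) r h"
      using ousted_fwd[OF feasible_Rej(2) _ prJK _ sub] rS rp by (simp add: pf K_simps)
    moreover have "(r,h) \<notin> rejs (filter keep \<tau>)" using feasible_Rej(3) by (simp add: rf)
    ultimately show ?case using feasible_Rej(4) by (simp add: keep_def feasible.feasible_Rej)
  qed
  obtain \<sigma>K where mK: "maximal_feasible K \<sigma>K" using exists_maximal[OF wK] by blast
  note cK = maximal_char[OF mK]
  have fKs: "feasible K \<sigma>K" using mK by (simp add: maximal_feasible_def)
  have "rejs (filter keep \<sigma>J) \<subseteq> rejs \<sigma>K"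
    using dom[OF _ _ _ mK fK[OF fJ]] by auto
  then have RJK: "rejI J \<subseteq> rejI K" using cJ cK rf by auto
  define N where "N = S - acc I"
  have invK: "rejs \<tau> \<inter> N = {}" if "feasible K \<tau>" for \<tau>
    using that
  proof (induction rule: feasible.induct)
    case feasible_Nil
    then show ?case by simp
  next
    case (feasible_Prop \<tau> r h)
    then show ?case by simp
  next
    case (feasible_Rej \<tau> r h)
    have "(r,h) \<notin> N"
    proof
      assume rN: "(r,h) \<in> N"
      then have rPJ: "(r,h) \<in> propI J" and rl: "r \<in> set (hpref J h)" and rnI: "(r,h) \<notin> propI I"
        using accI by (auto simp: N_def S_def)
      have "props \<tau> \<subseteq> propI J" using feasible_inv[OF feasible_Rej(1)] accK SPJ by blast
      then have "res_h (props \<tau>) h \<subseteq> res_h (props \<sigma>J) h" using cJ by (auto simp: res_h_def)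
      then have "ousted J (props \<sigma>J) r h"
        using ousted_back[OF feasible_Rej(2) prJK rl] rPJ cJ by (simp add: K_simps)
      moreover have "(r,h) \<notin> rejs \<sigma>J" using rPJ rnI simpJ RPI cJ by blast
      ultimately have "feasible J (\<sigma>J @ [Reject r h])" using fJ by (intro feasible.feasible_Rej)
      then show False using mJ by (auto simp: maximal_feasible_def)
    qed
    then show ?case using feasible_Rej(4) by simp
  qed
  have "(propI K - propI I) \<inter> (rejI K - rejI I) = {}"
  proof -
    have "propI K - propI I \<subseteq> N" using feasible_inv[OF fKs] cK accK accI by (auto simp: N_def)
    moreover have "rejI K \<inter> N = {}" using invK[OF fKs] cK by simp
    ultimately show ?thesis by blast
  qed
  then have "simple_extension I K" using extK by (simp add: simple_extension_def)
  then show ?thesis using compK RJK by blast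
qed

end
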